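(* Let $G=(V,E)$ be a finite graph and let $\mu$ be a Bernoulli bond percolation measure on $\Omega=\{0,1\}^E$. Let $C_1,C_2$ be independent random configurations, each with law $\mu$. Consider an adaptive procedure (decision tree) $T$ which, at each step, based on the values of $C_1$ and $C_2$ on the edges revealed so far, chooses a not-yet-revealed edge $e$ and decides whether $e$ belongs to a set $S$ or to its complement $\overline S=E\setminus S$, and then reveals $C_1(e)$ and $C_2(e)$; this continues until every edge has been revealed. Let $S=S(C_1,C_2)\subseteq E$ be the resulting (random) set. Then $C_1\to_S C_2$ and $C_2\to_S C_1=C_1\to_{\overline S}C_2$ are independent, and each of them has law $\mu$.
   Context: A Bernoulli bond percolation measure $\mu$ on $\{0,1\}^E$ is a product measure in which each edge $e$ is open (value $1$) independently with probability $p_e\in[0,1]$. For configurations $C,C'\in\{0,1\}^E$ and $S\subseteq E$, $C\to_S C'$ denotes the configuration that coincides with $C$ on $S$ and with $C'$ on $\overline S=E\setminus S$. *)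

theory Defs
  imports "HOL-Probability.Probability"
begin

text \<open>Configurations are functions 'e => bool (True = open).\<close>

definition bernoulli_percolation :: "'e set \<Rightarrow> ('e \<Rightarrow> real) \<Rightarrow> ('e \<Rightarrow> bool) pmf" where
  "bernoulli_percolation E p = Pi_pmf E False (\<lambda>e. bernoulli_pmf (p e))"

definition switch_conf :: "('e \<Rightarrow> bool) \<Rightarrow> 'e set \<Rightarrow> ('e \<Rightarrow> bool) \<Rightarrow> ('e \<Rightarrow> bool)" where
  "switch_conf C S C' = (\<lambda>e. if e \<in> S then C e else C' e)"

text \<open>Decision trees: a node queries edge e, puts e into S iff the flag is True,
then reveals C1 e and C2 e and continues with the subtree selected by these two values.\<close>
datatype 'e dtree = Leaf | Node 'e bool "bool \<Rightarrow> bool \<Rightarrow> 'e dtree"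

primrec valid_tree :: "'e set \<Rightarrow> 'e dtree \<Rightarrow> bool" where
  "valid_tree R Leaf = (R = {})"
| "valid_tree R (Node e b k) = (e \<in> R \<and> (\<forall>x y. valid_tree (R - {e}) (k x y)))"

primrec selected_set :: "'e dtree \<Rightarrow> ('e \<Rightarrow> bool) \<Rightarrow> ('e \<Rightarrow> bool) \<Rightarrow> 'e set" where
  "selected_set Leaf C1 C2 = {}"
| "selected_set (Node e b k) C1 C2 =
     (if b then {e} else {}) \<union> selected_set (k (C1 e) (C2 e)) C1 C2"

end

theory Submission
  imports Defs
begin

lemma map_pair_bind: "map_pmf h (pair_pmf A B) = bind_pmf A (\<lambda>y. map_pmf (\<lambda>f. h (y,f)) B)"
  by (simp add: pair_pmf_def map_pmf_def bind_assoc_pmf bind_return_pmf)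

lemma Pi_pair: "finite A \<Longrightarrow> Pi_pmf A (d1,d2) (\<lambda>e. pair_pmf (P e) (Q e)) =
   map_pmf (\<lambda>(f,g). \<lambda>e. (f e, g e)) (pair_pmf (Pi_pmf A d1 P) (Pi_pmf A d2 Q))"
proof (induction A rule: finite_induct)
  case empty
  then show ?case by (simp add: pair_return_pmf1 )
next
  case (insert x A)
  show ?case
    apply (simp add: Pi_pmf_insert insert map_pair_bind map_bind_pmf bind_map_pmf pmf.map_comp o_def)
    apply (simp add: pair_pmf_def bind_assoc_pmf bind_return_pmf bind_map_pmf map_pmf_def[symmetric])
    apply (rule bind_pmf_cong[OF refl])
    apply (subst bind_commute_pmf[of "Pi_pmf A d1 P"])
    apply (rule bind_pmf_cong[OF refl])+
    apply (rule map_pmf_cong[OF refl])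
    apply (auto simp: fun_eq_iff)
    done
qed

lemma sel_subset: "valid_tree R t \<Longrightarrow> selected_set t C1 C2 \<subseteq> R"
proof (induction t arbitrary: R)
  case Leaf
  then show ?case by simp
next
  case (Node e b k)
  have eR: "e \<in> R" and v: "valid_tree (R - {e}) (k (C1 e) (C2 e))" using Node.prems by auto
  have "selected_set (k (C1 e) (C2 e)) C1 C2 \<subseteq> R - {e}"
    by (rule Node.IH[OF rangeI rangeI v])
  then show ?case using eR by auto
qed

lemma sel_cong: "valid_tree R t \<Longrightarrow> (\<forall>e\<in>R. C1 e = D1 e \<and> C2 e = D2 e) \<Longrightarrow>
   selected_set t C1 C2 = selected_set t D1 D2"
proof (induction t arbitrary: R)
  case Leaf
  then show ?case by simp
next
  case (Node e b k)
  have eR: "e \<in> R" using Node.prems(1) by simp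
  have c: "C1 e = D1 e" "C2 e = D2 e" using Node.prems(2) eR by auto
  have v: "valid_tree (R - {e}) (k (C1 e) (C2 e))" using Node.prems(1) by simp
  have ag: "\<forall>e'\<in>R - {e}. C1 e' = D1 e' \<and> C2 e' = D2 e'" using Node.prems(2) by blast
  have "selected_set (k (C1 e) (C2 e)) C1 C2 = selected_set (k (C1 e) (C2 e)) D1 D2"
    by (rule Node.IH[OF rangeI rangeI v ag])
  then show ?case using c by simp
qed

definition FF :: "'e dtree \<Rightarrow> ('e \<Rightarrow> bool \<times> bool) \<Rightarrow> ('e \<Rightarrow> bool \<times> bool)" where
  "FF t Z = (\<lambda>e. if e \<in> selected_set t (fst \<circ> Z) (snd \<circ> Z) then Z e else prod.swap (Z e))"

lemma FF_node:
  assumes "valid_tree (R - {e}) (k (fst y) (snd y))"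
  shows "FF (Node e b k) (f(e:=y)) = (FF (k (fst y) (snd y)) f)(e := (if b then y else prod.swap y))"
proof -
  let ?t = "k (fst y) (snd y)"
  have c: "selected_set ?t (fst \<circ> f(e:=y)) (snd \<circ> f(e:=y)) = selected_set ?t (fst \<circ> f) (snd \<circ> f)"
    by (rule sel_cong[OF assms]) auto
  have s: "e \<notin> selected_set ?t (fst \<circ> f) (snd \<circ> f)" using sel_subset[OF assms] by blast
  show ?thesis using c s by (auto simp: FF_def fun_eq_iff)
qed

lemma main_lemma:
  fixes Q :: "'e \<Rightarrow> (bool \<times> bool) pmf"
  assumes "prod.swap d = d" "\<And>e. map_pmf prod.swap (Q e) = Q e"
  shows "finite R \<Longrightarrow> valid_tree R t \<Longrightarrow> map_pmf (FF t) (Pi_pmf R d Q) = Pi_pmf R d Q"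
proof (induction t arbitrary: R)
  case Leaf
  then show ?case using assms(1) by (simp add: FF_def fun_eq_iff)
next
  case (Node e b k)
  let ?R = "R - {e}"
  have eR: "e \<in> R" and v: "\<And>x y. valid_tree ?R (k x y)" using Node.prems by auto
  have fin: "finite ?R" using Node.prems by auto
  have R: "R = insert e ?R" using eR by blast
  have g: "map_pmf (\<lambda>y. if b then y else prod.swap y) (Q e) = Q e"
    using assms(2) by (cases b) auto
  have "map_pmf (FF (Node e b k)) (Pi_pmf R d Q)
     = map_pmf (FF (Node e b k)) (map_pmf (\<lambda>(y,f). f(e:=y)) (pair_pmf (Q e) (Pi_pmf ?R d Q)))"
    by (subst R, subst Pi_pmf_insert) (use fin in auto)
  also have "\<dots> = bind_pmf (Q e) (\<lambda>y. map_pmf (\<lambda>f. f(e := (if b then y else prod.swap y)))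
        (map_pmf (FF (k (fst y) (snd y))) (Pi_pmf ?R d Q)))"
    by (simp add: pmf.map_comp o_def map_pair_bind map_bind_pmf FF_node[OF v])
  also have "\<dots> = bind_pmf (Q e) (\<lambda>y. map_pmf (\<lambda>f. f(e := (if b then y else prod.swap y))) (Pi_pmf ?R d Q))"
  proof -
    have "map_pmf (FF (k x y)) (Pi_pmf ?R d Q) = Pi_pmf ?R d Q" for x y
      by (rule Node.IH[OF rangeI rangeI fin v])
    then show ?thesis by simp
  qed
  also have "\<dots> = map_pmf (\<lambda>(y,f). f(e:=y)) (pair_pmf (map_pmf (\<lambda>y. if b then y else prod.swap y) (Q e)) (Pi_pmf ?R d Q))"
    by (simp add: map_pair_bind bind_map_pmf)
  also have "\<dots> = Pi_pmf R d Q"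
    by (subst g, subst R, subst Pi_pmf_insert) (use fin in auto)
  finally show ?case .
qed

lemma comp_lemma: "(\<lambda>(C1, C2). let S = selected_set T C1 C2 in
                     (switch_conf C1 S C2, switch_conf C2 S C1)) \<circ> (\<lambda>Z::'e \<Rightarrow> bool \<times> bool. (fst \<circ> Z, snd \<circ> Z))
   = (\<lambda>Z. (fst \<circ> Z, snd \<circ> Z)) \<circ> FF T"
proof
  fix Z :: "'e \<Rightarrow> bool \<times> bool"
  show "((\<lambda>(C1, C2). let S = selected_set T C1 C2 in
                     (switch_conf C1 S C2, switch_conf C2 S C1)) \<circ> (\<lambda>Z::'e \<Rightarrow> bool \<times> bool. (fst \<circ> Z, snd \<circ> Z))) Z
   = ((\<lambda>Z. (fst \<circ> Z, snd \<circ> Z)) \<circ> FF T) Z"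
    by (auto simp: fun_eq_iff FF_def switch_conf_def Let_def)
qed

lemma switch_lemma: assumes "S \<subseteq> E" "\<And>e. e \<notin> E \<Longrightarrow> C1 e = False \<and> C2 e = False"
  shows "switch_conf C2 S C1 = switch_conf C1 (E - S) C2"
proof
  fix e show "switch_conf C2 S C1 e = switch_conf C1 (E - S) C2 e"
    using assms(1) assms(2)[of e] unfolding switch_conf_def by auto
qed

theorem mainTheorem5:
  fixes E :: "'e set" and p :: "'e \<Rightarrow> real" and T :: "'e dtree"
  assumes "finite E"
    and "\<And>e. e \<in> E \<Longrightarrow> 0 \<le> p e \<and> p e \<le> 1"
    and "valid_tree E T"
  shows "map_pmf (\<lambda>(C1, C2). let S = selected_set T C1 C2 in
                     (switch_conf C1 S C2, switch_conf C2 S C1))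
           (pair_pmf (bernoulli_percolation E p) (bernoulli_percolation E p))
         = pair_pmf (bernoulli_percolation E p) (bernoulli_percolation E p)
       \<and> (\<forall>C1 \<in> set_pmf (bernoulli_percolation E p). \<forall>C2 \<in> set_pmf (bernoulli_percolation E p).
            switch_conf C2 (selected_set T C1 C2) C1 = switch_conf C1 (E - selected_set T C1 C2) C2)"
proof
  define B where "B = (\<lambda>e. bernoulli_pmf (p e))"
  define Q where "Q = (\<lambda>e. pair_pmf (B e) (B e))"
  define spl where "spl = (\<lambda>Z::'e \<Rightarrow> bool \<times> bool. (fst \<circ> Z, snd \<circ> Z))"
  have bp: "bernoulli_percolation E p = Pi_pmf E False B" by (simp add: bernoulli_percolation_def B_def)
  have pair: "pair_pmf (Pi_pmf E False B) (Pi_pmf E False B) = map_pmf spl (Pi_pmf E (False,False) Q)"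
    unfolding Q_def by (subst Pi_pair[OF assms(1)]) (simp add: pmf.map_comp o_def spl_def case_prod_beta fun_eq_iff map_pmf_ident[unfolded id_def])
  have Qs: "\<And>e. map_pmf prod.swap (Q e) = Q e"
    proof -
    have sw: "prod.swap = (\<lambda>(x::bool,y::bool). (y,x))" by auto
    show "\<And>e. map_pmf prod.swap (Q e) = Q e" unfolding Q_def sw by (subst (2) pair_commute_pmf) simp
  qed
  have comp: "(\<lambda>(C1, C2). let S = selected_set T C1 C2 in
                     (switch_conf C1 S C2, switch_conf C2 S C1)) \<circ> spl = spl \<circ> FF T"
    unfolding spl_def by (rule comp_lemma)
  show "map_pmf (\<lambda>(C1, C2). let S = selected_set T C1 C2 in
                     (switch_conf C1 S C2, switch_conf C2 S C1))
           (pair_pmf (bernoulli_percolation E p) (bernoulli_percolation E p))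
         = pair_pmf (bernoulli_percolation E p) (bernoulli_percolation E p)"
  proof -
    let ?Phi = "(\<lambda>(C1, C2). let S = selected_set T C1 C2 in
                     (switch_conf C1 S C2, switch_conf C2 S C1))"
    have ml: "map_pmf (FF T) (Pi_pmf E (False,False) Q) = Pi_pmf E (False,False) Q"
      by (rule main_lemma[OF _ Qs assms(1,3)]) simp
    have "map_pmf ?Phi (map_pmf spl (Pi_pmf E (False,False) Q)) = map_pmf (?Phi \<circ> spl) (Pi_pmf E (False,False) Q)"
      by (simp only: pmf.map_comp)
    also have "\<dots> = map_pmf (spl \<circ> FF T) (Pi_pmf E (False,False) Q)"
      by (simp only: comp)
    also have "\<dots> = map_pmf spl (map_pmf (FF T) (Pi_pmf E (False,False) Q))"
      by (simp only: pmf.map_comp)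
    also have "\<dots> = map_pmf spl (Pi_pmf E (False,False) Q)"
      by (simp only: ml)
    finally show ?thesis unfolding bp pair .
  qed
next
  show "\<forall>C1 \<in> set_pmf (bernoulli_percolation E p). \<forall>C2 \<in> set_pmf (bernoulli_percolation E p).
            switch_conf C2 (selected_set T C1 C2) C1 = switch_conf C1 (E - selected_set T C1 C2) C2"
  proof (intro ballI)
    fix C1 C2 assume c1: "C1 \<in> set_pmf (bernoulli_percolation E p)" and c2: "C2 \<in> set_pmf (bernoulli_percolation E p)"
    have SS: "set_pmf (bernoulli_percolation E p) \<subseteq> {f. \<forall>x. x \<notin> E \<longrightarrow> f x = False}"
      unfolding bernoulli_percolation_def by (rule set_Pi_pmf_subset[OF assms(1)])
    have m1: "\<forall>x. x \<notin> E \<longrightarrow> C1 x = False" using subsetD[OF SS c1] by (rule CollectD)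
    have m2: "\<forall>x. x \<notin> E \<longrightarrow> C2 x = False" using subsetD[OF SS c2] by (rule CollectD)
    have outE: "C1 e = False \<and> C2 e = False" if "e \<notin> E" for e
      using conjI[OF m1[rule_format, OF that] m2[rule_format, OF that]] .
    have sub: "selected_set T C1 C2 \<subseteq> E" by (rule sel_subset[OF assms(3)])
    show "switch_conf C2 (selected_set T C1 C2) C1 = switch_conf C1 (E - selected_set T C1 C2) C2"
      by (rule switch_lemma[OF sub outE])
  qed
qed

end
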